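(* Let $m,n\ge 6$ be integers. Then $$\max\{\gamma_2^d(C_{m-1}\Box C_n),\ \gamma_2^d(C_m\Box C_{n-1})\}\le \gamma_2^d(C_m\Box C_n).$$
   Context: $C_k$ denotes the cycle on $k$ vertices, and $G\Box H$ is the Cartesian product: vertex set $V(G)\times V(H)$, with $(g,h)\sim(g',h')$ iff either $g=g'$ and $hh'\in E(H)$, or $h=h'$ and $gg'\in E(G)$. For a simple graph $\Gamma$ and a vertex $v$, let $\Gamma(v)$ be the set of vertices at distance $1$ from $v$ and $\Gamma_2(v)$ the set of vertices at distance exactly $2$ from $v$. A set $S\subseteq V(\Gamma)$ is a disjunctive dominating set if every vertex $v\notin S$ satisfies $|\Gamma(v)\cap S|\ge 1$ or $|\Gamma_2(v)\cap S|\ge 2$. The disjunctive domination number $\gamma_2^d(\Gamma)$ is the minimum cardinality of a disjunctive dominating set of $\Gamma$. *)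

theory Defs
  imports Main
begin

text \<open>A finite simple graph is given by a vertex set V and a symmetric irreflexive
adjacency relation E (only its restriction to V matters).\<close>

definition walk :: "'a set \<Rightarrow> ('a \<Rightarrow> 'a \<Rightarrow> bool) \<Rightarrow> nat \<Rightarrow> 'a \<Rightarrow> 'a \<Rightarrow> bool" where
  "walk V E k v w \<longleftrightarrow> (\<exists>p::nat \<Rightarrow> 'a. p 0 = v \<and> p k = w \<and> (\<forall>i\<le>k. p i \<in> V)
      \<and> (\<forall>i<k. E (p i) (p (Suc i))))"

definition at_dist :: "'a set \<Rightarrow> ('a \<Rightarrow> 'a \<Rightarrow> bool) \<Rightarrow> nat \<Rightarrow> 'a \<Rightarrow> 'a set" where
  "at_dist V E k v = {w \<in> V. walk V E k v w \<and> (\<forall>j<k. \<not> walk V E j v w)}"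

definition disj_dom_set :: "'a set \<Rightarrow> ('a \<Rightarrow> 'a \<Rightarrow> bool) \<Rightarrow> 'a set \<Rightarrow> bool" where
  "disj_dom_set V E S \<longleftrightarrow> S \<subseteq> V \<and>
     (\<forall>v \<in> V - S. card (at_dist V E 1 v \<inter> S) \<ge> 1 \<or> card (at_dist V E 2 v \<inter> S) \<ge> 2)"

definition disj_dom_num :: "'a set \<Rightarrow> ('a \<Rightarrow> 'a \<Rightarrow> bool) \<Rightarrow> nat" where
  "disj_dom_num V E = Min (card ` {S. disj_dom_set V E S})"

definition cycle_V :: "nat \<Rightarrow> nat set" where
  "cycle_V k = {0..<k}"

definition cycle_E :: "nat \<Rightarrow> nat \<Rightarrow> nat \<Rightarrow> bool" where
  "cycle_E k i j \<longleftrightarrow> i \<noteq> j \<and> (j = (i + 1) mod k \<or> i = (j + 1) mod k)"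

definition cprod_V :: "'a set \<Rightarrow> 'b set \<Rightarrow> ('a \<times> 'b) set" where
  "cprod_V V1 V2 = V1 \<times> V2"

definition cprod_E :: "('a \<Rightarrow> 'a \<Rightarrow> bool) \<Rightarrow> ('b \<Rightarrow> 'b \<Rightarrow> bool) \<Rightarrow> 'a \<times> 'b \<Rightarrow> 'a \<times> 'b \<Rightarrow> bool" where
  "cprod_E E1 E2 x y \<longleftrightarrow> (fst x = fst y \<and> E2 (snd x) (snd y)) \<or> (snd x = snd y \<and> E1 (fst x) (fst y))"

definition torus_ddn :: "nat \<Rightarrow> nat \<Rightarrow> nat" where
  "torus_ddn m n = disj_dom_num (cprod_V (cycle_V m) (cycle_V n)) (cprod_E (cycle_E m) (cycle_E n))"

end

theory Submission
  imports Defs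
begin


lemma walk_0: "walk V E 0 v w \<longleftrightarrow> v \<in> V \<and> w = v"
  unfolding walk_def by (auto intro!: exI[of _ "\<lambda>_. v"])

lemma walk_1: "walk V E 1 v w \<longleftrightarrow> v \<in> V \<and> w \<in> V \<and> E v w"
proof
  assume "walk V E 1 v w"
  then obtain p where "p 0 = v" "p 1 = w" "\<forall>i\<le>1. p i \<in> V" "\<forall>i<1. E (p i) (p (Suc i))"
    unfolding walk_def by blast
  then show "v \<in> V \<and> w \<in> V \<and> E v w" by (metis One_nat_def le_numeral_extra(4) less_one zero_le)
next
  assume a: "v \<in> V \<and> w \<in> V \<and> E v w"
  show "walk V E 1 v w" unfolding walk_def
    by (rule exI[of _ "\<lambda>i. if i = 0 then v else w"]) (use a le_Suc_eq in auto)
qed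

lemma walk_2: "walk V E 2 v w \<longleftrightarrow> v \<in> V \<and> w \<in> V \<and> (\<exists>u\<in>V. E v u \<and> E u w)"
proof
  assume "walk V E 2 v w"
  then obtain p where p: "p 0 = v" "p 2 = w" "\<forall>i\<le>2. p i \<in> V" "\<forall>i<2. E (p i) (p (Suc i))"
    unfolding walk_def by blast
  have "E (p 0) (p 1)" "E (p 1) (p 2)" using p(4) by (auto simp: numeral_2_eq_2)
  moreover have "p 1 \<in> V" "p 0 \<in> V" "p 2 \<in> V" using p(3) by auto
  ultimately show "v \<in> V \<and> w \<in> V \<and> (\<exists>u\<in>V. E v u \<and> E u w)" using p by auto
next
  assume a: "v \<in> V \<and> w \<in> V \<and> (\<exists>u\<in>V. E v u \<and> E u w)"
  then obtain u where u: "u \<in> V" "E v u" "E u w" by blast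
  have le2: "i \<le> 2 \<Longrightarrow> i = 0 \<or> i = 1 \<or> i = 2" for i :: nat by auto
  have lt2: "i < 2 \<Longrightarrow> i = 0 \<or> i = 1" for i :: nat by auto
  show "walk V E 2 v w" unfolding walk_def
    apply (rule exI[of _ "\<lambda>i. if i = 0 then v else if i = 1 then u else w"])
    using a u le2 lt2 by (auto simp: numeral_2_eq_2)
qed

lemma at_dist_1: "w \<in> at_dist V E 1 v \<longleftrightarrow> w \<in> V \<and> v \<in> V \<and> E v w \<and> w \<noteq> v"
  unfolding at_dist_def by (auto simp: walk_0 walk_1[unfolded One_nat_def] One_nat_def)

lemma at_dist_2: "w \<in> at_dist V E 2 v \<longleftrightarrow> w \<in> V \<and> v \<in> V \<and> (\<exists>u\<in>V. E v u \<and> E u w)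
   \<and> w \<noteq> v \<and> \<not> E v w"
proof -
  have lt2: "(\<forall>j<2. P j) \<longleftrightarrow> P 0 \<and> P (1::nat)" for P
    using less_2_cases_iff by auto
  show ?thesis unfolding at_dist_def by (auto simp: walk_0 walk_1[unfolded One_nat_def] walk_2 lt2)
qed

lemma card_ge2: "card A \<ge> 2 \<Longrightarrow> \<exists>x y. x \<in> A \<and> y \<in> A \<and> x \<noteq> y"
  by (metis One_nat_def card.infinite card_le_Suc0_iff_eq not_less_eq_eq numeral_2_eq_2 zero_le)

lemma transfer:
  assumes fin: "finite V'"
  and hV: "\<forall>x\<in>V. h x \<in> V'"
  and gV: "\<forall>y\<in>V'. g y \<in> V \<and> h (g y) = y"
  and hom: "\<forall>x\<in>V. \<forall>y\<in>V. E x y \<longrightarrow> h x = h y \<or> E' (h x) (h y)"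
  and inj2: "\<forall>v s1 s2. v \<in> V \<longrightarrow> s1 \<in> V \<longrightarrow> s2 \<in> V \<longrightarrow> s1 \<noteq> s2 \<longrightarrow> h s1 = h s2
       \<longrightarrow> walk V E 2 v s1 \<longrightarrow> walk V E 2 v s2 \<longrightarrow> False"
  and dd: "disj_dom_set V E S"
  shows "disj_dom_set V' E' (h ` S)"
  unfolding disj_dom_set_def
proof (intro conjI ballI)
  have SV: "S \<subseteq> V" using dd unfolding disj_dom_set_def by blast
  then show "h ` S \<subseteq> V'" using hV by blast
  fix v' assume v': "v' \<in> V' - h ` S"
  define v where "v = g v'"
  have vV: "v \<in> V" and hv: "h v = v'" using gV v' v_def by auto
  have vS: "v \<notin> S" using hv v' by blast
  have fin1: "finite (at_dist V' E' 1 v' \<inter> h ` S)" "finite (at_dist V' E' 2 v' \<inter> h ` S)"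
    using fin unfolding at_dist_def by auto
  have one: "h s \<in> at_dist V' E' 1 v' \<inter> h ` S" if s: "s \<in> S" "E v s" for s
  proof -
    have "s \<in> V" using s SV by blast
    then have "h v = h s \<or> E' (h v) (h s)" using hom vV s by blast
    moreover have "h s \<noteq> v'" using s v' by blast
    ultimately show ?thesis using s v' hv \<open>s \<in> V\<close> hV by (auto simp: at_dist_1 at_dist_1[unfolded One_nat_def])
  qed
  have c1: "card (at_dist V' E' 1 v' \<inter> h ` S) \<ge> 1" if "s \<in> S" "E v s" for s
    using one[OF that] fin1(1) by (metis One_nat_def Suc_leI card_gt_0_iff empty_iff)
  have "card (at_dist V E 1 v \<inter> S) \<ge> 1 \<or> card (at_dist V E 2 v \<inter> S) \<ge> 2"
    using dd vV vS unfolding disj_dom_set_def by blast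
  then show "card (at_dist V' E' 1 v' \<inter> h ` S) \<ge> 1 \<or> card (at_dist V' E' 2 v' \<inter> h ` S) \<ge> 2"
  proof
    assume "card (at_dist V E 1 v \<inter> S) \<ge> 1"
    then obtain s where "s \<in> at_dist V E 1 v \<inter> S"
      by (metis card.empty ex_in_conv not_one_le_zero)
    then show ?thesis using c1 by (auto simp: at_dist_1 at_dist_1[unfolded One_nat_def])
  next
    assume "card (at_dist V E 2 v \<inter> S) \<ge> 2"
    then obtain s1 s2 where s12: "s1 \<in> at_dist V E 2 v \<inter> S" "s2 \<in> at_dist V E 2 v \<inter> S" "s1 \<noteq> s2"
      using card_ge2 by blast
    show ?thesis
    proof (cases "h s1 \<in> at_dist V' E' 1 v' \<or> h s2 \<in> at_dist V' E' 1 v'")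
      case True
      then have "at_dist V' E' 1 v' \<inter> h ` S \<noteq> {}" using s12 by blast
      then show ?thesis using fin1(1) by (metis One_nat_def Suc_leI card_gt_0_iff)
    next
      case False
      have two: "h s \<in> at_dist V' E' 2 v' \<inter> h ` S"
        if s: "s \<in> at_dist V E 2 v \<inter> S" "h s \<notin> at_dist V' E' 1 v'" for s
      proof -
        obtain u where u: "u \<in> V" "E v u" "E u s" "s \<in> V" using s by (auto simp: at_dist_2)
        have hu: "h u \<in> V'" "h s \<in> V'" using hV u by auto
        have hs: "h s \<noteq> v'" using s v' by blast
        have a: "h u = v' \<or> E' v' (h u)" using hom u vV hv by metis
        have b: "h u = h s \<or> E' (h u) (h s)" using hom u by blast
        have nE: "\<not> E' v' (h s)" using s(2) hs hu v' by (auto simp: at_dist_1 at_dist_1[unfolded One_nat_def])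
        have "E' v' (h u) \<and> E' (h u) (h s)" using a b nE hs by auto
        then show ?thesis using hu v' hs nE s by (auto simp: at_dist_2)
      qed
      have t1: "h s1 \<in> at_dist V' E' 2 v' \<inter> h ` S" "h s2 \<in> at_dist V' E' 2 v' \<inter> h ` S"
        using two s12 False by auto
      have "h s1 \<noteq> h s2"
      proof
        assume "h s1 = h s2"
        moreover have "walk V E 2 v s1" "walk V E 2 v s2" "s1 \<in> V" "s2 \<in> V"
          using s12 by (auto simp: at_dist_2 walk_2)
        ultimately show False using inj2 vV s12(3) by blast
      qed
      then have "card {h s1, h s2} = 2" by simp
      moreover have "card {h s1, h s2} \<le> card (at_dist V' E' 2 v' \<inter> h ` S)"
        using t1 fin1(2) by (intro card_mono) auto
      ultimately show ?thesis by simp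
    qed
  qed
qed



lemma cyc_char:
  assumes "k \<ge> 3" "i < k" "j < k"
  shows "cycle_E k i j \<longleftrightarrow> (j = i+1 \<or> i = j+1 \<or> (i = k-1 \<and> j = 0) \<or> (j = k-1 \<and> i = 0))"
proof -
  have mi: "(i+1) mod k = (if i+1 < k then i+1 else 0)"
  proof (cases "i+1 < k")
    case False then have "i + 1 = k" using assms by linarith
    then show ?thesis by simp
  qed simp
  have mj: "(j+1) mod k = (if j+1 < k then j+1 else 0)"
  proof (cases "j+1 < k")
    case False then have "j + 1 = k" using assms by linarith
    then show ?thesis by simp
  qed simp
  show ?thesis unfolding cycle_E_def mi mj using assms by auto
qed

definition mf :: "nat \<Rightarrow> nat \<Rightarrow> nat" where
  "mf k i = (if i = k - 1 then k - 2 else i)"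

lemma mf_lt: "k \<ge> 4 \<Longrightarrow> i < k \<Longrightarrow> mf k i < k - 1"
  unfolding mf_def by auto

lemma merge_hom:
  assumes "k \<ge> 4" "i < k" "j < k" "cycle_E k i j"
  shows "mf k i = mf k j \<or> cycle_E (k-1) (mf k i) (mf k j)"
proof -
  have c: "j = i+1 \<or> i = j+1 \<or> (i = k-1 \<and> j = 0) \<or> (j = k-1 \<and> i = 0)"
    using cyc_char assms by auto
  have k3: "k - 1 \<ge> 3" using assms by auto
  have ch: "cycle_E (k-1) (mf k i) (mf k j) \<longleftrightarrow> (mf k j = mf k i+1 \<or> mf k i = mf k j+1 \<or>
     (mf k i = k-1-1 \<and> mf k j = 0) \<or> (mf k j = k-1-1 \<and> mf k i = 0))"
    by (rule cyc_char[OF k3 mf_lt[OF assms(1,2)] mf_lt[OF assms(1,3)]])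
  show ?thesis
  proof (cases "i = k - 1")
    case True
    then have mi: "mf k i = k - 2" unfolding mf_def by simp
    show ?thesis
    proof (cases "j = k - 1")
      case True then show ?thesis using \<open>i = k - 1\<close> by simp
    next
      case False
      then have mj: "mf k j = j" unfolding mf_def by simp
      from c True False assms have "j = k - 2 \<or> j = 0" by auto
      then show ?thesis apply (subst ch) unfolding mi mj using assms by auto
    qed
  next
    case False
    then have mi: "mf k i = i" unfolding mf_def by simp
    show ?thesis
    proof (cases "j = k - 1")
      case True
      then have mj: "mf k j = k - 2" unfolding mf_def by simp
      from c True False assms have "i = k - 2 \<or> i = 0" by auto
      then show ?thesis apply (subst ch) unfolding mi mj using assms by auto
    next
      case False
      then have mj: "mf k j = j" unfolding mf_def by simp
      have "i < k - 1" "j < k - 1" using assms \<open>i \<noteq> k - 1\<close> False by auto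
      then show ?thesis apply (subst ch) unfolding mi mj using c assms by auto
    qed
  qed
qed

lemma mf_inj:
  assumes "k \<ge> 4" "i < k" "j < k" "i \<noteq> j" "mf k i = mf k j"
  shows "cycle_E k i j"
proof -
  have "(i = k - 1 \<and> j = k - 2) \<or> (j = k - 1 \<and> i = k - 2)"
    using assms unfolding mf_def by (auto split: if_splits)
  then show ?thesis using cyc_char[OF _ assms(2,3)] assms by auto
qed

lemma cyc_int:
  assumes "k \<ge> 3" "i < k" "j < k" "cycle_E k i j"
  shows "\<exists>d t. (d = 1 \<or> d = -1) \<and> int j = int i + d + int k * t"
proof -
  have c: "j = i+1 \<or> i = j+1 \<or> (i = k-1 \<and> j = 0) \<or> (j = k-1 \<and> i = 0)"
    using cyc_char assms by auto
  then show ?thesis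
  proof (elim disjE)
    assume "j = i+1" then show ?thesis by (intro exI[of _ 1] exI[of _ 0]) auto
  next
    assume "i = j+1" then show ?thesis by (intro exI[of _ "-1"] exI[of _ 0]) auto
  next
    assume "i = k-1 \<and> j = 0" then show ?thesis using assms by (intro exI[of _ 1] exI[of _ "-1"]) auto
  next
    assume "j = k-1 \<and> i = 0" then show ?thesis using assms by (intro exI[of _ "-1"] exI[of _ 1]) auto
  qed
qed

abbreviation TV where "TV m n \<equiv> cprod_V (cycle_V m) (cycle_V n)"
abbreviation TE where "TE m n \<equiv> cprod_E (cycle_E m) (cycle_E n)"

lemma TV_iff: "x \<in> TV m n \<longleftrightarrow> fst x < m \<and> snd x < n"
  unfolding cprod_V_def cycle_V_def by (cases x) auto

lemma torus_int:
  assumes "m \<ge> 3" "n \<ge> 3" "x \<in> TV m n" "y \<in> TV m n" "TE m n x y"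
  shows "\<exists>a b t u. ((a = 0 \<and> (b = 1 \<or> b = -1)) \<or> (b = 0 \<and> (a = 1 \<or> a = -1))) \<and>
     int (fst y) = int (fst x) + a + int m * t \<and> int (snd y) = int (snd x) + b + int n * u"
proof -
  have l: "fst x < m" "snd x < n" "fst y < m" "snd y < n" using assms TV_iff by auto
  from assms(5) consider "fst x = fst y" "cycle_E n (snd x) (snd y)" | "snd x = snd y" "cycle_E m (fst x) (fst y)"
    unfolding cprod_E_def by blast
  then show ?thesis
  proof cases
    case 1
    then obtain d t where "(d = 1 \<or> d = -1)" "int (snd y) = int (snd x) + d + int n * t"
      using cyc_int l assms by metis
    then show ?thesis using 1 by (intro exI[of _ 0] exI[of _ d] exI[of _ 0] exI[of _ t]) auto
  next
    case 2
    then obtain d t where "(d = 1 \<or> d = -1)" "int (fst y) = int (fst x) + d + int m * t"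
      using cyc_int l assms by metis
    then show ?thesis using 2 by (intro exI[of _ d] exI[of _ 0] exI[of _ t] exI[of _ 0]) auto
  qed
qed

lemma small_mult: "(M::int) \<ge> 6 \<Longrightarrow> \<bar>M * T\<bar> \<le> 5 \<Longrightarrow> M * T = 0"
proof (rule ccontr)
  assume a: "M \<ge> 6" "\<bar>M * T\<bar> \<le> 5" "M * T \<noteq> 0"
  then have "\<bar>T\<bar> \<ge> 1" by auto
  then have "M * \<bar>T\<bar> \<ge> M * 1" using a by (intro mult_left_mono) auto
  moreover have "\<bar>M * T\<bar> = M * \<bar>T\<bar>" using a by (simp add: abs_mult)
  ultimately show False using a by linarith
qed

lemma five: "(c1::int) \<in> {1,-1} \<Longrightarrow> c2 \<in> {1,-1} \<Longrightarrow> c3 \<in> {1,-1} \<Longrightarrow> c4 \<in> {1,-1} \<Longrightarrow> c5 \<in> {1,-1}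
  \<Longrightarrow> c1 + c2 + c5 - c3 - c4 \<noteq> 0"
  by auto

lemma unit_bd: "((a = 0 \<and> (b = 1 \<or> b = -1)) \<or> (b = 0 \<and> (a = 1 \<or> a = -1))) \<Longrightarrow>
   -1 \<le> (a::int) \<and> a \<le> 1 \<and> -1 \<le> (b::int) \<and> b \<le> 1 \<and> a + b \<in> {1,-1}"
  by auto

lemma parity:
  assumes mn: "m \<ge> 6" "n \<ge> 6" and V: "v \<in> TV m n" "u1 \<in> TV m n" "u2 \<in> TV m n" "s1 \<in> TV m n" "s2 \<in> TV m n"
  and E: "TE m n v u1" "TE m n u1 s1" "TE m n v u2" "TE m n u2 s2" "TE m n s1 s2"
  shows False
proof -
  have m3: "m \<ge> 3" "n \<ge> 3" using mn by auto
  obtain a1 b1 t1 w1 where 1: "((a1 = 0 \<and> (b1 = 1 \<or> b1 = -1)) \<or> (b1 = 0 \<and> (a1 = 1 \<or> a1 = -1)))"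
     "int (fst u1) = int (fst v) + a1 + int m * t1" "int (snd u1) = int (snd v) + b1 + int n * w1"
    using torus_int[OF m3 V(1) V(2) E(1)] by blast
  obtain a2 b2 t2 w2 where 2: "((a2 = 0 \<and> (b2 = 1 \<or> b2 = -1)) \<or> (b2 = 0 \<and> (a2 = 1 \<or> a2 = -1)))"
     "int (fst s1) = int (fst u1) + a2 + int m * t2" "int (snd s1) = int (snd u1) + b2 + int n * w2"
    using torus_int[OF m3 V(2) V(4) E(2)] by blast
  obtain a3 b3 t3 w3 where 3: "((a3 = 0 \<and> (b3 = 1 \<or> b3 = -1)) \<or> (b3 = 0 \<and> (a3 = 1 \<or> a3 = -1)))"
     "int (fst u2) = int (fst v) + a3 + int m * t3" "int (snd u2) = int (snd v) + b3 + int n * w3"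
    using torus_int[OF m3 V(1) V(3) E(3)] by blast
  obtain a4 b4 t4 w4 where 4: "((a4 = 0 \<and> (b4 = 1 \<or> b4 = -1)) \<or> (b4 = 0 \<and> (a4 = 1 \<or> a4 = -1)))"
     "int (fst s2) = int (fst u2) + a4 + int m * t4" "int (snd s2) = int (snd u2) + b4 + int n * w4"
    using torus_int[OF m3 V(3) V(5) E(4)] by blast
  obtain a5 b5 t5 w5 where 5: "((a5 = 0 \<and> (b5 = 1 \<or> b5 = -1)) \<or> (b5 = 0 \<and> (a5 = 1 \<or> a5 = -1)))"
     "int (fst s2) = int (fst s1) + a5 + int m * t5" "int (snd s2) = int (snd s1) + b5 + int n * w5"
    using torus_int[OF m3 V(4) V(5) E(5)] by blast
  have ea: "int m * (t3 + t4 - t1 - t2 - t5) = a1 + a2 + a5 - a3 - a4"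
    using 1 2 3 4 5 by (simp add: algebra_simps)
  have eb: "int n * (w3 + w4 - w1 - w2 - w5) = b1 + b2 + b5 - b3 - b4"
    using 1 2 3 4 5 by (simp add: algebra_simps)
  have "\<bar>a1 + a2 + a5 - a3 - a4\<bar> \<le> 5" "\<bar>b1 + b2 + b5 - b3 - b4\<bar> \<le> 5"
    unfolding abs_le_iff using unit_bd[OF 1(1)] unit_bd[OF 2(1)] unit_bd[OF 3(1)] unit_bd[OF 4(1)] unit_bd[OF 5(1)]
    by auto
  then have za: "a1 + a2 + a5 - a3 - a4 = 0" and zb: "b1 + b2 + b5 - b3 - b4 = 0"
    using small_mult[of "int m"] small_mult[of "int n"] ea eb mn by (metis of_nat_numeral of_nat_le_iff)+
  have "(a1 + b1) + (a2 + b2) + (a5 + b5) - (a3 + b3) - (a4 + b4) \<noteq> 0"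
    using unit_bd[OF 1(1)] unit_bd[OF 2(1)] unit_bd[OF 3(1)] unit_bd[OF 4(1)] unit_bd[OF 5(1)]
    by (intro five) auto
  then show False using za zb by linarith
qed



lemma dds_fin: "finite V \<Longrightarrow> finite (card ` {S. disj_dom_set V E S})"
  unfolding disj_dom_set_def by (rule finite_imageI) (rule finite_subset[of _ "Pow V"], auto)

lemma ddn_le: "finite V \<Longrightarrow> disj_dom_set V E S \<Longrightarrow> disj_dom_num V E \<le> card S"
  unfolding disj_dom_num_def using dds_fin by (intro Min_le) auto

lemma ddn_ex: "finite V \<Longrightarrow> \<exists>S. disj_dom_set V E S \<and> disj_dom_num V E = card S"
proof -
  assume f: "finite V"
  have "disj_dom_set V E V" unfolding disj_dom_set_def by auto
  then have "disj_dom_num V E \<in> card ` {S. disj_dom_set V E S}"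
    unfolding disj_dom_num_def using dds_fin[OF f] by (intro Min_in) auto
  then show ?thesis by auto
qed

lemma TV_fin: "finite (TV m n)"
  unfolding cprod_V_def cycle_V_def by simp

lemma TE_iff: "TE m n x y \<longleftrightarrow> (fst x = fst y \<and> cycle_E n (snd x) (snd y)) \<or> (snd x = snd y \<and> cycle_E m (fst x) (fst y))"
  unfolding cprod_E_def by simp

lemma mf_id: "i < k - 1 \<Longrightarrow> mf k i = i" unfolding mf_def by auto

lemma red1:
  assumes mn: "m \<ge> 6" "n \<ge> 6"
  shows "torus_ddn (m - 1) n \<le> torus_ddn m n"
proof -
  obtain S where S: "disj_dom_set (TV m n) (TE m n) S" "torus_ddn m n = card S"
    using ddn_ex[OF TV_fin] unfolding torus_ddn_def by blast
  define h where "h = (\<lambda>x::nat\<times>nat. (mf m (fst x), snd x))"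
  have "disj_dom_set (TV (m-1) n) (TE (m-1) n) (h ` S)"
  proof (rule transfer[where g = id])
    show "finite (TV (m-1) n)" by (rule TV_fin)
    show "\<forall>x\<in>TV m n. h x \<in> TV (m-1) n" using mf_lt mn unfolding h_def by (auto simp: TV_iff)
    show "\<forall>y\<in>TV (m-1) n. id y \<in> TV m n \<and> h (id y) = y" using mf_id unfolding h_def by (auto simp: TV_iff)
    show "\<forall>x\<in>TV m n. \<forall>y\<in>TV m n. TE m n x y \<longrightarrow> h x = h y \<or> TE (m-1) n (h x) (h y)"
    proof (intro ballI impI)
      fix x y assume xy: "x \<in> TV m n" "y \<in> TV m n" "TE m n x y"
      then consider "fst x = fst y" "cycle_E n (snd x) (snd y)" | "snd x = snd y" "cycle_E m (fst x) (fst y)"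
        unfolding TE_iff by blast
      then show "h x = h y \<or> TE (m-1) n (h x) (h y)"
      proof cases
        case 1 then show ?thesis unfolding h_def TE_iff by auto
      next
        case 2
        then have "mf m (fst x) = mf m (fst y) \<or> cycle_E (m-1) (mf m (fst x)) (mf m (fst y))"
          using merge_hom mn xy unfolding TV_iff by auto
        then show ?thesis using 2 unfolding h_def TE_iff by (auto simp: prod_eq_iff)
      qed
    qed
    show "\<forall>v s1 s2. v \<in> TV m n \<longrightarrow> s1 \<in> TV m n \<longrightarrow> s2 \<in> TV m n \<longrightarrow> s1 \<noteq> s2 \<longrightarrow> h s1 = h s2
       \<longrightarrow> walk (TV m n) (TE m n) 2 v s1 \<longrightarrow> walk (TV m n) (TE m n) 2 v s2 \<longrightarrow> False"
    proof (intro allI impI)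
      fix v s1 s2 assume a: "v \<in> TV m n" "s1 \<in> TV m n" "s2 \<in> TV m n" "s1 \<noteq> s2" "h s1 = h s2"
        "walk (TV m n) (TE m n) 2 v s1" "walk (TV m n) (TE m n) 2 v s2"
      have "snd s1 = snd s2" "mf m (fst s1) = mf m (fst s2)" using a(5) unfolding h_def by auto
      moreover then have "fst s1 \<noteq> fst s2" using a(4) by (auto simp: prod_eq_iff)
      ultimately have "TE m n s1 s2" using mf_inj[of m "fst s1" "fst s2"] mn a(2,3)
        unfolding TE_iff TV_iff by auto
      moreover obtain u1 where "u1 \<in> TV m n" "TE m n v u1" "TE m n u1 s1" using a(6) walk_2 by metis
      moreover obtain u2 where "u2 \<in> TV m n" "TE m n v u2" "TE m n u2 s2" using a(7) walk_2 by metis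
      ultimately show False using parity[OF mn] a by metis
    qed
  qed (rule S(1))
  then have "torus_ddn (m-1) n \<le> card (h ` S)" unfolding torus_ddn_def by (rule ddn_le[OF TV_fin])
  also have "\<dots> \<le> card S" by (rule card_image_le) (meson S(1) TV_fin disj_dom_set_def finite_subset)
  finally show ?thesis using S(2) by simp
qed

lemma red2:
  assumes mn: "m \<ge> 6" "n \<ge> 6"
  shows "torus_ddn m (n - 1) \<le> torus_ddn m n"
proof -
  obtain S where S: "disj_dom_set (TV m n) (TE m n) S" "torus_ddn m n = card S"
    using ddn_ex[OF TV_fin] unfolding torus_ddn_def by blast
  define h where "h = (\<lambda>x::nat\<times>nat. (fst x, mf n (snd x)))"
  have "disj_dom_set (TV m (n-1)) (TE m (n-1)) (h ` S)"
  proof (rule transfer[where g = id])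
    show "finite (TV m (n-1))" by (rule TV_fin)
    show "\<forall>x\<in>TV m n. h x \<in> TV m (n-1)" using mf_lt mn unfolding h_def by (auto simp: TV_iff)
    show "\<forall>y\<in>TV m (n-1). id y \<in> TV m n \<and> h (id y) = y" using mf_id unfolding h_def by (auto simp: TV_iff)
    show "\<forall>x\<in>TV m n. \<forall>y\<in>TV m n. TE m n x y \<longrightarrow> h x = h y \<or> TE m (n-1) (h x) (h y)"
    proof (intro ballI impI)
      fix x y assume xy: "x \<in> TV m n" "y \<in> TV m n" "TE m n x y"
      then consider "fst x = fst y" "cycle_E n (snd x) (snd y)" | "snd x = snd y" "cycle_E m (fst x) (fst y)"
        unfolding TE_iff by blast
      then show "h x = h y \<or> TE m (n-1) (h x) (h y)"
      proof cases
        case 2 then show ?thesis unfolding h_def TE_iff by auto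
      next
        case 1
        then have "mf n (snd x) = mf n (snd y) \<or> cycle_E (n-1) (mf n (snd x)) (mf n (snd y))"
          using merge_hom mn xy unfolding TV_iff by auto
        then show ?thesis using 1 unfolding h_def TE_iff by (auto simp: prod_eq_iff)
      qed
    qed
    show "\<forall>v s1 s2. v \<in> TV m n \<longrightarrow> s1 \<in> TV m n \<longrightarrow> s2 \<in> TV m n \<longrightarrow> s1 \<noteq> s2 \<longrightarrow> h s1 = h s2
       \<longrightarrow> walk (TV m n) (TE m n) 2 v s1 \<longrightarrow> walk (TV m n) (TE m n) 2 v s2 \<longrightarrow> False"
    proof (intro allI impI)
      fix v s1 s2 assume a: "v \<in> TV m n" "s1 \<in> TV m n" "s2 \<in> TV m n" "s1 \<noteq> s2" "h s1 = h s2"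
        "walk (TV m n) (TE m n) 2 v s1" "walk (TV m n) (TE m n) 2 v s2"
      have "fst s1 = fst s2" "mf n (snd s1) = mf n (snd s2)" using a(5) unfolding h_def by auto
      moreover then have "snd s1 \<noteq> snd s2" using a(4) by (auto simp: prod_eq_iff)
      ultimately have "TE m n s1 s2" using mf_inj[of n "snd s1" "snd s2"] mn a(2,3)
        unfolding TE_iff TV_iff by auto
      moreover obtain u1 where "u1 \<in> TV m n" "TE m n v u1" "TE m n u1 s1" using a(6) walk_2 by metis
      moreover obtain u2 where "u2 \<in> TV m n" "TE m n v u2" "TE m n u2 s2" using a(7) walk_2 by metis
      ultimately show False using parity[OF mn] a by metis
    qed
  qed (rule S(1))
  then have "torus_ddn m (n-1) \<le> card (h ` S)" unfolding torus_ddn_def by (rule ddn_le[OF TV_fin])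
  also have "\<dots> \<le> card S" by (rule card_image_le) (meson S(1) TV_fin disj_dom_set_def finite_subset)
  finally show ?thesis using S(2) by simp
qed

theorem lemma3:
  fixes m n :: nat
  assumes "m \<ge> 6" and "n \<ge> 6"
  shows "max (torus_ddn (m - 1) n) (torus_ddn m (n - 1)) \<le> torus_ddn m n"
  using red1[OF assms] red2[OF assms] by simp

end
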